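(* Let $X$ be a vector field on $\mathbb{S}^1$ for which $\mathcal{E}_X^\pm$ is defined, let $A\in\mathrm{O}_0(1,2)$ and $v\in\mathbb{R}^{1,2}$. Then $\mathcal{E}^\pm_{A_*X+\Lambda(v)}=A_*\mathcal{E}^\pm_X+\mathcal{E}^\pm_{\Lambda(v)}$.
   Context: $\mathbb{R}^{1,2}$ is $\mathbb{R}^3$ with $\langle x,y\rangle=-x_0y_0+x_1y_1+x_2y_2$; $\mathrm{O}_0(1,2)$ is the identity component of its linear isometry group, acting on $\overline{\mathbb{D}^2}$ by $A\cdot\eta=\Pi(A(1,\eta))$, $\Pi(x_0,x_1,x_2)=(x_1/x_0,x_2/x_0)$; $A_*$ denotes pushforward of vector fields by $\eta\mapsto A\cdot\eta$ (on $\mathbb{S}^1$ or $\mathbb{D}^2$). Minkowski cross product: $\langle x\boxtimes y,u\rangle=\det(x,y,u)$. $\Lambda(v)$ is the Killing field $\eta\mapsto\mathrm{d}_{(1,\eta)}\Pi((1,\eta)\boxtimes v)$ (also on $\mathbb{S}^1$). A vector field $X$ on $\mathbb{S}^1$ is $X(z)=iz\phi_X(z)$. $\phi_X^-(\eta)=\sup\{a(\eta):a\text{ affine},a|_{\mathbb{S}^1}\le\phi_X\}$, $\phi_X^+(\eta)=\inf\{a(\eta):a\text{ affine},a|_{\mathbb{S}^1}\ge\phi_X\}$. $\Sigma^-(\eta)$ is the set of $\sigma$ with $\langle(1,\xi),\sigma\rangle\le\phi_X^-(\xi)$ for all $\xi\in\mathbb{D}^2$ and equality at $\eta$; $\Sigma^+(\eta)$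 likewise with $\ge\phi^+_X$. $\mathcal{E}_X^\pm$ is defined when each $\Sigma^\pm(\eta)$, $\eta\in\mathbb{D}^2$, is a single point or a compact segment (this holds e.g. when $\phi_X$ is lower semicontinuous for $\mathcal{E}_X^-$, upper semicontinuous for $\mathcal{E}_X^+$), and then $\mathcal{E}_X^\pm(\eta)=\mathrm{d}_{(1,\eta)}\Pi((1,\eta)\boxtimes\sigma^\pm(\eta))$ with $\sigma^\pm(\eta)$ that point or the midpoint of that segment. *)

theory Defs
  imports "HOL-Analysis.Analysis"
begin

text \<open>Minkowski space R^{1,2} is modelled as real^3 with coordinates x$1 = x_0, x$2 = x_1, x$3 = x_2.
  The (closed) disk and the circle are modelled inside the complex plane, eta = (Re eta, Im eta).\<close>

definition lor :: "real^3 \<Rightarrow> real^3 \<Rightarrow> real" where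
  "lor x y = - x$1 * y$1 + x$2 * y$2 + x$3 * y$3"

definition O12 :: "(real^3^3) set" where
  "O12 = {A. invertible A \<and> (\<forall>x y. lor (A *v x) (A *v y) = lor x y)}"

definition O0_12 :: "(real^3^3) set" where
  "O0_12 = connected_component_set O12 (mat 1)"

definition mcross :: "real^3 \<Rightarrow> real^3 \<Rightarrow> real^3" where
  "mcross x y = (THE w. \<forall>u. lor w u = det (vector [x, y, u] :: real^3^3))"

definition lift :: "complex \<Rightarrow> real^3" where
  "lift \<eta> = vector [1, Re \<eta>, Im \<eta>]"

definition Proj :: "real^3 \<Rightarrow> complex" where
  "Proj x = Complex (x$2 / x$1) (x$3 / x$1)"

definition act :: "real^3^3 \<Rightarrow> complex \<Rightarrow> complex" where
  "act A \<eta> = Proj (A *v lift \<eta>)"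

definition push :: "real^3^3 \<Rightarrow> (complex \<Rightarrow> complex) \<Rightarrow> complex \<Rightarrow> complex" where
  "push A Y \<xi> = (let \<eta> = act (matrix_inv A) \<xi> in frechet_derivative (act A) (at \<eta>) (Y \<eta>))"

definition Lam :: "real^3 \<Rightarrow> complex \<Rightarrow> complex" where
  "Lam v \<eta> = frechet_derivative Proj (at (lift \<eta>)) (mcross (lift \<eta>) v)"

text \<open>A vector field on S^1 is a map X with X(z) = i z phi_X(z), phi_X real.\<close>
definition vf_S1 :: "(complex \<Rightarrow> complex) \<Rightarrow> bool" where
  "vf_S1 X \<longleftrightarrow> (\<forall>z\<in>sphere 0 1. X z / (\<i> * z) \<in> \<real>)"

definition phi :: "(complex \<Rightarrow> complex) \<Rightarrow> complex \<Rightarrow> real" where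
  "phi X z = Re (X z / (\<i> * z))"

definition affine_fun :: "(complex \<Rightarrow> real) \<Rightarrow> bool" where
  "affine_fun a \<longleftrightarrow> (\<exists>c0 c1 c2. \<forall>\<xi>. a \<xi> = c0 + c1 * Re \<xi> + c2 * Im \<xi>)"

text \<open>phi^- (s = False) and phi^+ (s = True), extended-real valued.\<close>
definition phi_env :: "bool \<Rightarrow> (complex \<Rightarrow> complex) \<Rightarrow> complex \<Rightarrow> ereal" where
  "phi_env s X \<eta> = (if s
     then Inf {ereal (a \<eta>) | a. affine_fun a \<and> (\<forall>z\<in>sphere 0 1. a z \<ge> phi X z)}
     else Sup {ereal (a \<eta>) | a. affine_fun a \<and> (\<forall>z\<in>sphere 0 1. a z \<le> phi X z)})"

definition Sig :: "bool \<Rightarrow> (complex \<Rightarrow> complex) \<Rightarrow> complex \<Rightarrow> (real^3) set" where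
  "Sig s X \<eta> = {\<sigma>. (\<forall>\<xi>\<in>ball 0 1.
        (if s then ereal (lor (lift \<xi>) \<sigma>) \<ge> phi_env s X \<xi>
              else ereal (lor (lift \<xi>) \<sigma>) \<le> phi_env s X \<xi>))
      \<and> ereal (lor (lift \<eta>) \<sigma>) = phi_env s X \<eta>}"

definition E_defined :: "bool \<Rightarrow> (complex \<Rightarrow> complex) \<Rightarrow> bool" where
  "E_defined s X \<longleftrightarrow> (\<forall>\<eta>\<in>ball 0 1. \<exists>a b. Sig s X \<eta> = closed_segment a b)"

definition sig :: "bool \<Rightarrow> (complex \<Rightarrow> complex) \<Rightarrow> complex \<Rightarrow> real^3" where
  "sig s X \<eta> = (SOME m. \<exists>a b. Sig s X \<eta> = closed_segment a b \<and> m = midpoint a b)"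

definition E :: "bool \<Rightarrow> (complex \<Rightarrow> complex) \<Rightarrow> complex \<Rightarrow> complex" where
  "E s X \<eta> = frechet_derivative Proj (at (lift \<eta>)) (mcross (lift \<eta>) (sig s X \<eta>))"

end

theory Submission
  imports Defs
begin


lemma lor_expand: "lor x y = - x$1 * y$1 + x$2 * y$2 + x$3 * y$3" by (simp add: lor_def)

definition mc :: "real^3 \<Rightarrow> real^3 \<Rightarrow> real^3" where
  "mc x y = vector [x$3*y$2 - x$2*y$3, x$3*y$1 - x$1*y$3, x$1*y$2 - x$2*y$1]"

lemma lor_eq_all: assumes "\<And>u. lor w u = lor w' u" shows "w = w'"
proof -
  have "w$1 = w'$1" using assms[of "axis 1 1"] by (simp add: lor_def axis_def)
  moreover have "w$2 = w'$2" using assms[of "axis 2 1"] by (simp add: lor_def axis_def)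
  moreover have "w$3 = w'$3" using assms[of "axis 3 1"] by (simp add: lor_def axis_def)
  ultimately show ?thesis by (simp add: vec_eq_iff forall_3)
qed

lemma mcross_eq: "mcross x y = mc x y"
  unfolding mcross_def
proof (rule the_equality)
  show "\<forall>u. lor (mc x y) u = det (vector [x, y, u] :: real^3^3)"
    by (simp add: lor_def mc_def det_3 algebra_simps)
  show "\<And>w. \<forall>u. lor w u = det (vector [x, y, u] :: real^3^3) \<Longrightarrow> w = mc x y"
    by (rule lor_eq_all) (simp add: lor_def mc_def det_3 algebra_simps)
qed



lemma inv_props: assumes "invertible (A::real^3^3)"
  shows "A ** matrix_inv A = mat 1" "matrix_inv A ** A = mat 1"
proof -
  have "\<exists>A'. A ** A' = mat 1 \<and> A' ** A = mat 1" using assms invertible_def by blast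
  then have "A ** matrix_inv A = mat 1 \<and> matrix_inv A ** A = mat 1"
    unfolding matrix_inv_def by (rule someI_ex)
  then show "A ** matrix_inv A = mat 1" "matrix_inv A ** A = mat 1" by auto
qed

lemma inv_vec: assumes "invertible (A::real^3^3)"
  shows "A *v (matrix_inv A *v x) = x" "matrix_inv A *v (A *v x) = x"
  using inv_props[OF assms] by (simp_all add: matrix_vector_mul_assoc)

lemma O12_lor: "A \<in> O12 \<Longrightarrow> lor (A *v x) (A *v y) = lor x y"
  by (simp add: O12_def)

lemma O12_inv: assumes "A \<in> O12" shows "matrix_inv A \<in> O12"
proof -
  have inv: "invertible A" using assms by (simp add: O12_def)
  have "invertible (matrix_inv A)" using inv_props[OF inv] invertible_def by blast
  moreover have "lor (matrix_inv A *v x) (matrix_inv A *v y) = lor x y" for x y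
    using O12_lor[OF assms, of "matrix_inv A *v x" "matrix_inv A *v y"] inv_vec[OF inv] by simp
  ultimately show ?thesis by (simp add: O12_def)
qed

lemma O12_adj: assumes "A \<in> O12" shows "lor x (A *v w) = lor (matrix_inv A *v x) w"
proof -
  have inv: "invertible A" using assms by (simp add: O12_def)
  show ?thesis using O12_lor[OF O12_inv[OF assms], of x "A *v w"] inv_vec[OF inv] by simp
qed

lemma O12_11: assumes "A \<in> O12" shows "(A$1$1)^2 \<ge> 1"
proof -
  have "lor (A *v axis 1 1) (A *v axis 1 1) = -1"
    using O12_lor[OF assms] by (simp add: lor_def axis_def)
  then have "(A$2$1)^2 + (A$3$1)^2 - (A$1$1)^2 = -1"
    by (simp add: lor_def matrix_vector_mult_basis column_def power2_eq_square)
  moreover have "(A$2$1)^2 \<ge> 0" "(A$3$1)^2 \<ge> 0" by auto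
  ultimately show ?thesis by linarith
qed

definition Jm :: "real^3^3" where
  "Jm = (\<chi> i j. if i = j then (if i = 1 then -1 else 1) else 0)"

lemma det_Jm: "det Jm = -1"
  by (simp add: det_3 Jm_def)

lemma lor_axis: "lor (axis i 1) (axis j (1::real)) = Jm$i$j"
  using exhaust_3[of i] exhaust_3[of j] by (auto simp: lor_def axis_def Jm_def)

lemma O12_mat: assumes "A \<in> O12" shows "transpose A ** Jm ** A = Jm"
proof -
  have "(transpose A ** Jm ** A)$i$j = lor (A *v axis i 1) (A *v axis j 1)" for i j
    by (simp add: matrix_matrix_mult_def transpose_def Jm_def sum_3 lor_def matrix_vector_mult_basis
        column_def algebra_simps)
  then show ?thesis using O12_lor[OF assms] lor_axis by (simp add: vec_eq_iff)
qed

lemma O12_det: assumes "A \<in> O12" shows "(det A)^2 = 1"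
proof -
  have "det (transpose A ** Jm ** A) = det Jm" using O12_mat[OF assms] by simp
  then have "det A * (-1) * det A = -1" by (simp add: det_mul det_Jm)
  then show ?thesis by (simp add: power2_eq_square)
qed

lemma det_rows: "det (vector [A *v x, A *v y, A *v u] :: real^3^3) = det A * det (vector [x, y, u] :: real^3^3)"
proof -
  have "(vector [A *v x, A *v y, A *v u] :: real^3^3) = (vector [x, y, u] :: real^3^3) ** transpose A"
    by (simp add: vec_eq_iff forall_3 matrix_matrix_mult_def matrix_vector_mult_def transpose_def sum_3 mult.commute)
  then show ?thesis by (simp add: det_mul)
qed

lemma lor_mc: "lor (mc x y) u = det (vector [x, y, u] :: real^3^3)"
  using mcross_eq mcross_def by (simp add: lor_def mc_def det_3 algebra_simps)

lemma O12_mc: assumes "A \<in> O12" "det A = 1" shows "A *v mc x y = mc (A *v x) (A *v y)"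
proof (rule lor_eq_all)
  fix u
  have inv: "invertible A" using assms by (simp add: O12_def)
  define u' where "u' = matrix_inv A *v u"
  have u: "u = A *v u'" using inv_vec[OF inv] u'_def by simp
  show "lor (A *v mc x y) u = lor (mc (A *v x) (A *v y)) u"
    unfolding u using O12_lor[OF assms(1)] by (simp add: lor_mc det_rows assms(2))
qed



lemma cont_entry: "continuous_on S (\<lambda>A::real^3^3. A$i$j)"
  by (intro continuous_intros)

lemma cont_det: "continuous_on S (\<lambda>A::real^3^3. det A)"
  unfolding det_3 by (intro continuous_intros)

lemma mat1_O12: "mat 1 \<in> O12"
  unfolding O12_def invertible_def by (auto simp: matrix_mul_lid)

lemma interval_avoid:
  fixes T :: "real set"
  assumes "connected T" "1 \<in> T" "c \<in> T" "c < 0" "\<And>x. x \<in> T \<Longrightarrow> x \<noteq> 0"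
  shows False
proof -
  have "is_interval T" using assms(1) is_interval_connected_1 by blast
  then have "0 \<in> T" using assms(2,3,4) unfolding is_interval_1
    by (meson less_eq_real_def zero_less_one)
  then show False using assms(5) by blast
qed

lemma O0_props: assumes "A \<in> O0_12" shows "A \<in> O12" "A$1$1 > 0" "det A = 1"
proof -
  let ?C = "connected_component_set O12 (mat 1)"
  have C: "connected ?C" by (rule connected_connected_component)
  have sub: "?C \<subseteq> O12" by (rule connected_component_subset)
  have I: "mat 1 \<in> ?C" using mat1_O12 by (simp add: connected_component_refl)
  show AO: "A \<in> O12" using assms sub O0_12_def by blast
  have Ain: "A \<in> ?C" using assms O0_12_def by simp
  show "A$1$1 > 0"
  proof (rule ccontr)
    assume "\<not> A$1$1 > 0"
    then have neg: "A$1$1 < 0" using O12_11[OF AO] by (cases "A$1$1 = 0") auto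
    show False
    proof (rule interval_avoid[of "(\<lambda>M. M$1$1) ` ?C" "A$1$1"])
      show "connected ((\<lambda>M::real^3^3. M$1$1) ` ?C)" by (rule connected_continuous_image[OF cont_entry C])
      show "1 \<in> (\<lambda>M::real^3^3. M$1$1) ` ?C" using I by (rule rev_image_eqI) (simp add: mat_def)
      show "A$1$1 \<in> (\<lambda>M::real^3^3. M$1$1) ` ?C" using Ain by blast
      show "A$1$1 < 0" by fact
      fix x assume "x \<in> (\<lambda>M::real^3^3. M$1$1) ` ?C"
      then obtain M where "M \<in> ?C" "x = M$1$1" by blast
      then show "x \<noteq> 0" using O12_11[of M] sub by auto
    qed
  qed
  show "det A = 1"
  proof (rule ccontr)
    assume "det A \<noteq> 1"
    then have neg: "det A < 0" using O12_det[OF AO]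
      by (metis power2_eq_1_iff less_irrefl zero_less_one neg_less_0_iff_less not_less_iff_gr_or_eq)
    show False
    proof (rule interval_avoid[of "det ` ?C" "det A"])
      show "connected (det ` ?C)" by (rule connected_continuous_image[OF cont_det C])
      show "1 \<in> det ` ?C" using I by (rule rev_image_eqI) (simp add: det_I)
      show "det A \<in> det ` ?C" using Ain by blast
      show "det A < 0" by fact
      fix x assume "x \<in> det ` ?C"
      then obtain M where "M \<in> ?C" "x = det M" by blast
      then show "x \<noteq> 0" using O12_det[of M] sub by auto
    qed
  qed
qed



lemma rcs:
  assumes "p$1 > 0" "lor p p < 0" "lor q q \<le> 0" "lor p q < 0"
  shows "q$1 > 0"
proof (rule ccontr)
  assume "\<not> q$1 > 0"
  then have a: "-q$1 \<ge> 0" by simp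
  have pp: "p$2^2 + p$3^2 < p$1^2" using assms(2) by (simp add: lor_def power2_eq_square)
  have qq: "q$2^2 + q$3^2 \<le> q$1^2" using assms(3) by (simp add: lor_def power2_eq_square)
  have pq: "p$2*q$2 + p$3*q$3 < p$1*q$1" using assms(4) by (simp add: lor_def)
  have "p$1 * q$1 \<le> 0" using a assms(1) by (simp add: mult_nonneg_nonpos)
  then have ab: "\<bar>p$1*q$1\<bar> < \<bar>p$2*q$2 + p$3*q$3\<bar>" using pq by (auto simp: abs_if)
  have "(p$1*q$1)^2 < (p$2*q$2 + p$3*q$3)^2"
    using abs_le_square_iff[of "p$2*q$2 + p$3*q$3" "p$1*q$1"] ab by linarith
  also have "\<dots> \<le> (p$2^2 + p$3^2) * (q$2^2 + q$3^2)"
  proof -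
    have "0 \<le> (p$2*q$3 - p$3*q$2)^2" by simp
    then show ?thesis by (simp add: power2_eq_square algebra_simps)
  qed
  also have "\<dots> \<le> p$1^2 * q$1^2"
    using pp qq by (intro mult_mono) auto
  finally show False by (simp add: power_mult_distrib)
qed

definition pos :: "real^3^3 \<Rightarrow> bool" where
  "pos M \<longleftrightarrow> M \<in> O12 \<and> M$1$1 > 0"

lemma pos_future: assumes "pos M" "y$1 > 0" "lor y y \<le> 0" shows "(M *v y)$1 > 0"
proof (rule rcs[of "M *v axis 1 1"])
  have O: "M \<in> O12" using assms by (simp add: pos_def)
  show "(M *v axis 1 1)$1 > 0" using assms by (simp add: pos_def matrix_vector_mult_basis column_def)
  show "lor (M *v axis 1 1) (M *v axis 1 1) < 0" using O12_lor[OF O] by (simp add: lor_def axis_def)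
  show "lor (M *v y) (M *v y) \<le> 0" using O12_lor[OF O] assms by simp
  show "lor (M *v axis 1 1) (M *v y) < 0" using O12_lor[OF O] assms by (simp add: lor_def axis_def)
qed

lemma lor_axis1: "lor u (axis 1 1) = - u$1" "lor (axis 1 1) u = - u$1"
  by (simp_all add: lor_def axis_def)

lemma pos_inv: assumes "pos A" shows "pos (matrix_inv A)"
proof -
  have O: "A \<in> O12" using assms by (simp add: pos_def)
  have inv: "invertible A" using O by (simp add: O12_def)
  have e: "A *v (matrix_inv A *v axis 1 1) = axis 1 1" by (rule inv_vec[OF inv])
  have "lor (A *v axis 1 1) (A *v (matrix_inv A *v axis 1 1)) = lor (axis 1 1) (matrix_inv A *v axis 1 1)"
    by (rule O12_lor[OF O])
  then have "lor (A *v axis 1 1) (axis 1 1) = lor (axis 1 1) (matrix_inv A *v axis 1 1)"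
    unfolding e .
  then have "(matrix_inv A)$1$1 = A$1$1"
    unfolding lor_axis1 by (simp add: matrix_vector_mult_basis column_def)
  then show ?thesis using assms O12_inv[OF O] by (simp add: pos_def)
qed

lemma lift_nth[simp]: "lift \<eta> $ 1 = 1" "lift \<eta> $ 2 = Re \<eta>" "lift \<eta> $ 3 = Im \<eta>"
  by (simp_all add: lift_def)

lemma lor_lift: "lor (lift z) (lift z) = (cmod z)^2 - 1"
  using cmod_power2[of z] by (simp add: lor_def power2_eq_square)

lemma Proj_lift[simp]: "Proj (lift \<eta>) = \<eta>"
  by (simp add: Proj_def complex_eq_iff)

lemma lift_Proj: "x$1 \<noteq> 0 \<Longrightarrow> lift (Proj x) = (1 / x$1) *\<^sub>R x"
  by (simp add: vec_eq_iff forall_3 Proj_def lift_def)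

lemma Proj_scale: "t \<noteq> 0 \<Longrightarrow> Proj (t *\<^sub>R x) = Proj x"
  by (simp add: Proj_def)

lemma norm_Proj: assumes "x$1 \<noteq> 0" shows "(cmod (Proj x))^2 - 1 = lor x x / (x$1)^2"
proof -
  have "(cmod (Proj x))^2 = (x$2/x$1)^2 + (x$3/x$1)^2" using cmod_power2[of "Proj x"] by (simp add: Proj_def)
  then show ?thesis using assms by (simp add: lor_def field_simps power2_eq_square)
qed

lemma act_pos: assumes "pos M" "cmod z \<le> 1" shows "(M *v lift z)$1 > 0"
proof (rule pos_future[OF assms(1)])
  show "lift z $ 1 > 0" by simp
  have "(cmod z)^2 \<le> 1" using assms(2) by (simp add: power_le_one)
  then show "lor (lift z) (lift z) \<le> 0" by (simp add: lor_lift)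
qed

lemma act_norm: assumes "pos M" "cmod z \<le> 1"
  shows "(cmod (act M z))^2 - 1 = ((cmod z)^2 - 1) / ((M *v lift z)$1)^2"
proof -
  have O: "M \<in> O12" using assms by (simp add: pos_def)
  show ?thesis unfolding act_def
    using norm_Proj[of "M *v lift z"] act_pos[OF assms] O12_lor[OF O] by (simp add: lor_lift)
qed

lemma act_ball: assumes "pos M" "z \<in> ball 0 1" shows "act M z \<in> ball 0 1"
proof -
  have z: "cmod z < 1" using assms by simp
  have "(cmod z)^2 < 1" using z by (simp add: abs_square_less_1)
  moreover have "((M *v lift z)$1)^2 > 0" using act_pos[OF assms(1), of z] z by simp
  ultimately have "((cmod z)^2 - 1) / ((M *v lift z)$1)^2 < 0" by (simp add: divide_neg_pos)
  then have "(cmod (act M z))^2 < 1" using act_norm[OF assms(1), of z] z by simp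
  then show ?thesis by (simp add: abs_square_less_1)
qed

lemma act_sphere: assumes "pos M" "z \<in> sphere 0 1" shows "act M z \<in> sphere 0 1"
proof -
  have z: "cmod z = 1" using assms by simp
  then have "(cmod (act M z))^2 - 1 = 0"
    using act_norm[OF assms(1)] by simp
  then have "cmod (act M z) = 1 \<or> cmod (act M z) = -1" by (simp add: power2_eq_1_iff)
  then show ?thesis using norm_ge_zero[of "act M z"] by auto
qed

lemma lift_act: assumes "pos N" "cmod \<xi> \<le> 1"
  shows "lift (act N \<xi>) = (1 / (N *v lift \<xi>)$1) *\<^sub>R (N *v lift \<xi>)"
  unfolding act_def using lift_Proj act_pos[OF assms] by simp

lemma act_inv: assumes "pos N" "\<And>x. M *v (N *v x) = x" "cmod \<xi> \<le> 1"
  shows "act M (act N \<xi>) = \<xi>"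
proof -
  have t: "(N *v lift \<xi>)$1 > 0" by (rule act_pos[OF assms(1,3)])
  have "M *v lift (act N \<xi>) = (1 / (N *v lift \<xi>)$1) *\<^sub>R lift \<xi>"
    unfolding lift_act[OF assms(1,3)] by (simp add: matrix_vector_mult_scaleR assms(2))
  then show ?thesis unfolding act_def using t by (simp add: Proj_scale)
qed



definition dP :: "real^3 \<Rightarrow> real^3 \<Rightarrow> complex" where
  "dP y u = Complex ((u$2 * y$1 - y$2 * u$1) * inverse ((y$1)^2)) ((u$3 * y$1 - y$3 * u$1) * inverse ((y$1)^2))"

lemma nth_deriv: "((\<lambda>x::real^3. x$i) has_derivative (\<lambda>h. h$i)) (at y)"
  by (rule bounded_linear_imp_has_derivative) (rule bounded_linear_vec_nth)

lemma Proj_alt: "Proj x = (x$2/x$1) *\<^sub>R (1::complex) + (x$3/x$1) *\<^sub>R \<i>"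
  by (simp add: Proj_def complex_eq_iff)

lemma Proj_deriv: assumes "y$1 \<noteq> 0" shows "(Proj has_derivative dP y) (at y)"
proof -
  have q: "((\<lambda>x::real^3. x$i / x$1) has_derivative
     (\<lambda>h. - (y$i) * (inverse (y$1) * h$1 * inverse (y$1)) + h$i / y$1)) (at y)" for i
    by (rule has_derivative_divide[OF nth_deriv nth_deriv assms])
  have s: "((\<lambda>x::real^3. (x$i / x$1) *\<^sub>R c) has_derivative
     (\<lambda>h. (- (y$i) * (inverse (y$1) * h$1 * inverse (y$1)) + h$i / y$1) *\<^sub>R c)) (at y)" for i and c :: complex
    by (rule bounded_linear.has_derivative[OF bounded_linear_scaleR_left q])
  have "(Proj has_derivative (\<lambda>h. (- (y$2) * (inverse (y$1) * h$1 * inverse (y$1)) + h$2 / y$1) *\<^sub>R (1::complex)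
      + (- (y$3) * (inverse (y$1) * h$1 * inverse (y$1)) + h$3 / y$1) *\<^sub>R \<i>)) (at y)"
    unfolding Proj_alt[abs_def] by (rule has_derivative_add[OF s s])
  moreover have "(\<lambda>h. (- (y$2) * (inverse (y$1) * h$1 * inverse (y$1)) + h$2 / y$1) *\<^sub>R (1::complex)
      + (- (y$3) * (inverse (y$1) * h$1 * inverse (y$1)) + h$3 / y$1) *\<^sub>R \<i>) = dP y"
    using assms by (auto simp: dP_def complex_eq_iff field_simps power2_eq_square)
  ultimately show ?thesis by simp
qed

lemma fd_Proj: "y$1 \<noteq> 0 \<Longrightarrow> frechet_derivative Proj (at y) = dP y"
  using frechet_derivative_at[OF Proj_deriv] by simp

definition Lv :: "complex \<Rightarrow> real^3" where
  "Lv h = vector [0, Re h, Im h]"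

lemma lin_Lv: "bounded_linear Lv"
proof -
  have "linear Lv" by (rule linearI) (simp_all add: Lv_def vec_eq_iff forall_3)
  then show ?thesis by (simp add: linear_conv_bounded_linear)
qed

lemma lift_Lv: "lift \<eta> = Lv \<eta> + vector [1,0,0]"
  by (simp add: lift_def Lv_def vec_eq_iff forall_3)

lemma lift_deriv: "(lift has_derivative Lv) (at \<eta>)"
proof -
  have "((\<lambda>\<eta>. Lv \<eta> + vector [1,0,0]) has_derivative Lv) (at \<eta>)"
    by (rule has_derivative_add_const) (rule bounded_linear_imp_has_derivative[OF lin_Lv])
  then show ?thesis using lift_Lv by (metis (no_types, lifting) ext)
qed

lemma act_deriv: assumes "(A *v lift \<eta>)$1 \<noteq> 0"
  shows "(act A has_derivative (\<lambda>h. dP (A *v lift \<eta>) (A *v Lv h))) (at \<eta>)"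
proof -
  have m: "((\<lambda>x. A *v x) has_derivative (\<lambda>x. A *v x)) (at (lift \<eta>))"
    by (rule bounded_linear_imp_has_derivative) (rule matrix_vector_mul_bounded_linear)
  have "((\<lambda>\<eta>. A *v lift \<eta>) has_derivative (\<lambda>h. A *v Lv h)) (at \<eta>)"
    using diff_chain_at[OF lift_deriv m] by (simp add: o_def)
  from diff_chain_at[OF this Proj_deriv[OF assms]] show ?thesis
    by (simp add: o_def act_def[abs_def])
qed

lemma fd_act: "(A *v lift \<eta>)$1 \<noteq> 0 \<Longrightarrow> frechet_derivative (act A) (at \<eta>) = (\<lambda>h. dP (A *v lift \<eta>) (A *v Lv h))"
  using frechet_derivative_at[OF act_deriv] by simp

lemma lin_dP: "linear (dP y)"
  by (rule linearI) (simp_all add: dP_def complex_eq_iff algebra_simps)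

lemma dP_self: "y$1 \<noteq> 0 \<Longrightarrow> dP y y = 0"
  by (simp add: dP_def complex_eq_iff field_simps)

lemma dP_scale: "t \<noteq> 0 \<Longrightarrow> y$1 \<noteq> 0 \<Longrightarrow> dP (t *\<^sub>R y) (t *\<^sub>R u) = dP y u"
  by (simp add: dP_def complex_eq_iff field_simps power2_eq_square)

lemma mc_scale: "mc (t *\<^sub>R x) y = t *\<^sub>R mc x y"
  by (simp add: mc_def vec_eq_iff forall_3 algebra_simps)

lemma mc_add2: "mc x (y + z) = mc x y + mc x z"
  by (simp add: mc_def vec_eq_iff forall_3 algebra_simps)

lemma Lv_dP: "y$1 = 1 \<Longrightarrow> Lv (dP y u) = u - u$1 *\<^sub>R y"
  by (simp add: Lv_def dP_def vec_eq_iff forall_3)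

lemma Lam_eq: "Lam v \<eta> = dP (lift \<eta>) (mc (lift \<eta>) v)"
  by (simp add: Lam_def fd_Proj mcross_eq)

lemma E_eq: "E s X \<eta> = Lam (sig s X \<eta>) \<eta>"
  by (simp add: E_def Lam_def)

lemma Lam_add: "Lam (v + w) \<eta> = Lam v \<eta> + Lam w \<eta>"
  unfolding Lam_eq mc_add2 using lin_dP linear_add by blast



lemma act_cball: assumes "pos M" "cmod z \<le> 1" shows "cmod (act M z) \<le> 1"
proof -
  have "(cmod z)^2 \<le> 1" using assms(2) by (simp add: power_le_one)
  moreover have "((M *v lift z)$1)^2 > 0" using act_pos[OF assms] by simp
  ultimately have "((cmod z)^2 - 1) / ((M *v lift z)$1)^2 \<le> 0" by (simp add: divide_nonpos_pos)
  then have "(cmod (act M z))^2 \<le> 1" using act_norm[OF assms] by simp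
  then show ?thesis by (simp add: power_le_one_iff abs_square_le_1)
qed

lemma lor_lin: "lor x (a + b) = lor x a + lor x b" "lor x (c *\<^sub>R a) = c * lor x a"
  "lor (c *\<^sub>R a) x = c * lor a x" "lor x (- a) = - lor x a" "lor x (a - b) = lor x a - lor x b"
  by (simp_all add: lor_def algebra_simps)

lemma pos_AB: assumes "pos A" shows "\<And>x. A *v (matrix_inv A *v x) = x" "\<And>x. matrix_inv A *v (A *v x) = x"
  using assms inv_vec by (auto simp: pos_def O12_def)

lemma push_eq: assumes "pos A" "cmod \<xi> \<le> 1"
  shows "push A Y \<xi> = dP (A *v lift (act (matrix_inv A) \<xi>)) (A *v Lv (Y (act (matrix_inv A) \<xi>)))"
proof -
  have B: "pos (matrix_inv A)" by (rule pos_inv[OF assms(1)])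
  have "cmod (act (matrix_inv A) \<xi>) \<le> 1" by (rule act_cball[OF B assms(2)])
  then have "(A *v lift (act (matrix_inv A) \<xi>))$1 > 0" by (rule act_pos[OF assms(1)])
  then show ?thesis unfolding push_def Let_def by (simp add: fd_act)
qed

lemma push_lin: assumes "pos A" "cmod \<xi> \<le> 1" "Y (act (matrix_inv A) \<xi>) = c *\<^sub>R Z (act (matrix_inv A) \<xi>)"
  shows "push A Y \<xi> = c *\<^sub>R push A Z \<xi>"
proof -
  have "linear (\<lambda>h. dP (A *v lift (act (matrix_inv A) \<xi>)) (A *v Lv h))"
    using lin_dP lin_Lv matrix_vector_mul_linear linear_compose[unfolded o_def]
    by (metis bounded_linear.linear)
  then show ?thesis unfolding push_eq[OF assms(1,2)] assms(3) using linear_scale by fastforce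
qed

lemma push_Lam: assumes "pos A" "det A = 1" "cmod \<xi> \<le> 1"
  shows "push A (Lam \<sigma>) \<xi> = Lam (A *v \<sigma>) \<xi>"
proof -
  have O: "A \<in> O12" using assms by (simp add: pos_def)
  define \<zeta> where "\<zeta> = act (matrix_inv A) \<xi>"
  define y where "y = lift \<zeta>"
  define u where "u = mc y \<sigma>"
  define t where "t = (A *v y)$1"
  have B: "pos (matrix_inv A)" by (rule pos_inv[OF assms(1)])
  have z1: "cmod \<zeta> \<le> 1" unfolding \<zeta>_def by (rule act_cball[OF B assms(3)])
  have t: "t > 0" unfolding t_def y_def by (rule act_pos[OF assms(1) z1])
  have xi: "act A \<zeta> = \<xi>" unfolding \<zeta>_def by (rule act_inv[OF B pos_AB(1)[OF assms(1)] assms(3)])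
  have Ay: "A *v y = t *\<^sub>R lift \<xi>"
    using lift_act[OF assms(1) z1] t unfolding xi t_def y_def by simp
  have y1: "y$1 = 1" by (simp add: y_def)
  have "push A (Lam \<sigma>) \<xi> = dP (A *v y) (A *v Lv (dP y u))"
    unfolding push_eq[OF assms(1,3)] \<zeta>_def[symmetric] y_def[symmetric] u_def Lam_eq ..
  also have "\<dots> = dP (A *v y) (A *v u - u$1 *\<^sub>R (A *v y))"
    by (simp add: Lv_dP[OF y1] matrix_vector_mult_diff_distrib matrix_vector_mult_scaleR)
  also have "\<dots> = dP (A *v y) (A *v u)"
    using lin_dP[of "A *v y"] dP_self[of "A *v y"] t unfolding t_def
    by (simp add: linear_diff linear_scale)
  also have "A *v u = mc (A *v y) (A *v \<sigma>)" unfolding u_def by (rule O12_mc[OF O assms(2)])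
  also have "dP (A *v y) (mc (A *v y) (A *v \<sigma>)) = Lam (A *v \<sigma>) \<xi>"
    unfolding Ay mc_scale Lam_eq using t by (simp add: dP_scale)
  finally show ?thesis .
qed

lemma Lam_circle: assumes "cmod z = 1" shows "Lam w z = \<i> * z * complex_of_real (lor (lift z) w)"
proof -
  have h: "Re z * Re z + Im z * Im z = 1" using assms cmod_power2[of z] by (simp add: power2_eq_square)
  show ?thesis unfolding Lam_eq
    by (simp add: dP_def mc_def lor_def complex_eq_iff) (use h in algebra)+
qed

lemma vf_at: assumes "vf_S1 X" "z \<in> sphere 0 1" shows "X z = phi X z *\<^sub>R (\<i> * z)"
proof -
  have "X z / (\<i> * z) \<in> \<real>" using assms by (simp add: vf_S1_def)
  then have "X z / (\<i> * z) = complex_of_real (phi X z)" by (simp add: phi_def Reals_cases complex_is_Real_iff complex_eq_iff)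
  moreover have "z \<noteq> 0" using assms by auto
  ultimately show ?thesis by (simp add: scaleR_conv_of_real field_simps)
qed

lemma i_Lam: "z \<in> sphere 0 1 \<Longrightarrow> \<i> * z = Lam (- axis 1 1) z"
  by (simp add: Lam_circle lor_lin lor_axis1)

lemma phi_push: assumes "pos A" "det A = 1" "vf_S1 X" "\<xi> \<in> sphere 0 1"
  shows "phi (push A X) \<xi> = phi X (act (matrix_inv A) \<xi>) * lor (lift \<xi>) (- (A *v axis 1 1))"
proof -
  have B: "pos (matrix_inv A)" by (rule pos_inv[OF assms(1)])
  have zs: "act (matrix_inv A) \<xi> \<in> sphere 0 1" by (rule act_sphere[OF B assms(4)])
  have x1: "cmod \<xi> \<le> 1" using assms(4) by simp
  have "push A X \<xi> = phi X (act (matrix_inv A) \<xi>) *\<^sub>R push A (Lam (- axis 1 1)) \<xi>"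
    by (rule push_lin[OF assms(1) x1]) (simp add: vf_at[OF assms(3) zs] i_Lam[OF zs])
  also have "\<dots> = phi X (act (matrix_inv A) \<xi>) *\<^sub>R Lam (A *v (- axis 1 1)) \<xi>"
    by (simp add: push_Lam[OF assms(1,2) x1])
  finally have "push A X \<xi> = phi X (act (matrix_inv A) \<xi>) *\<^sub>R (\<i> * \<xi> * complex_of_real (lor (lift \<xi>) (- (A *v axis 1 1))))"
    using assms(4) by (simp add: Lam_circle matrix_vector_mult_scaleR[of A "-1", simplified])
  moreover have "\<xi> \<noteq> 0" using assms(4) by auto
  ultimately show ?thesis by (simp add: phi_def scaleR_conv_of_real)
qed

lemma phi_add_Lam: assumes "\<xi> \<in> sphere 0 1"
  shows "phi (\<lambda>z. Y z + Lam v z) \<xi> = phi Y \<xi> + lor (lift \<xi>) v"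
proof -
  have "\<xi> \<noteq> 0" using assms by auto
  then show ?thesis using assms by (simp add: phi_def Lam_circle add_divide_distrib)
qed

lemma h_pos: assumes "pos A" "cmod \<xi> \<le> 1"
  shows "lor (lift \<xi>) (- (A *v axis 1 1)) = (matrix_inv A *v lift \<xi>)$1"
    "lor (lift \<xi>) (- (A *v axis 1 1)) > 0"
proof -
  have O: "A \<in> O12" using assms by (simp add: pos_def)
  show e: "lor (lift \<xi>) (- (A *v axis 1 1)) = (matrix_inv A *v lift \<xi>)$1"
    by (simp add: lor_lin O12_adj[OF O] lor_axis1)
  show "lor (lift \<xi>) (- (A *v axis 1 1)) > 0" unfolding e
    by (rule act_pos[OF pos_inv[OF assms(1)] assms(2)])
qed

lemma h_aff: assumes "pos A" "cmod \<xi> \<le> 1"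
  shows "lor (lift \<xi>) (- (A *v axis 1 1)) * lor (lift (act (matrix_inv A) \<xi>)) w = lor (lift \<xi>) (A *v w)"
proof -
  have O: "A \<in> O12" using assms by (simp add: pos_def)
  have B: "pos (matrix_inv A)" by (rule pos_inv[OF assms(1)])
  show ?thesis using h_pos[OF assms] unfolding lift_act[OF B assms(2)]
    by (simp add: lor_lin O12_adj[OF O])
qed



definition Fe :: "real \<Rightarrow> real \<Rightarrow> ereal \<Rightarrow> ereal" where
  "Fe c d x = ereal c * x + ereal d"

lemma Fe_ereal[simp]: "Fe c d (ereal x) = ereal (c * x + d)"
  by (simp add: Fe_def)

lemma Fe_mono_iff: assumes "c > 0" shows "Fe c d x \<le> Fe c d y \<longleftrightarrow> x \<le> y"
  using assms by (cases x; cases y) (auto simp: Fe_def)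

lemma Fe_inj_iff: assumes "c > 0" shows "Fe c d x = Fe c d y \<longleftrightarrow> x = y"
  using Fe_mono_iff[OF assms] by (metis order_antisym order_refl)

lemma Fe_surj: assumes "c > 0" shows "\<exists>x. Fe c d x = y"
proof (cases y)
  case (real r) then show ?thesis using assms by (intro exI[of _ "ereal ((r - d)/c)"]) (simp add: Fe_def)
next
  case PInf then show ?thesis using assms by (intro exI[of _ "\<infinity>"]) (simp add: Fe_def)
next
  case MInf then show ?thesis using assms by (intro exI[of _ "-\<infinity>"]) (simp add: Fe_def)
qed

lemma iso_Sup:
  fixes f :: "'a::complete_linorder \<Rightarrow> 'a"
  assumes mono: "\<And>x y. f x \<le> f y \<longleftrightarrow> x \<le> y" and surj: "\<And>y. \<exists>x. f x = y"
  shows "Sup (f ` S) = f (Sup S)" "Inf (f ` S) = f (Inf S)"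
proof -
  show "Sup (f ` S) = f (Sup S)"
  proof (rule antisym)
    show "Sup (f ` S) \<le> f (Sup S)" by (rule Sup_least) (auto simp: mono Sup_upper)
    obtain g where g: "f g = Sup (f ` S)" using surj by blast
    have "Sup S \<le> g" by (rule Sup_least) (metis g mono Sup_upper imageI)
    then show "f (Sup S) \<le> Sup (f ` S)" using g mono by metis
  qed
  show "Inf (f ` S) = f (Inf S)"
  proof (rule antisym)
    show "f (Inf S) \<le> Inf (f ` S)" by (rule Inf_greatest) (auto simp: mono Inf_lower)
    obtain g where g: "f g = Inf (f ` S)" using surj by blast
    have "g \<le> Inf S" by (rule Inf_greatest) (metis g mono Inf_lower imageI)
    then show "Inf (f ` S) \<le> f (Inf S)" using g mono by metis
  qed
qed

lemma affine_lor: "affine_fun a \<longleftrightarrow> (\<exists>w. a = (\<lambda>\<xi>. lor (lift \<xi>) w))"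
proof
  assume "affine_fun a"
  then obtain c0 c1 c2 where c: "\<And>\<xi>. a \<xi> = c0 + c1 * Re \<xi> + c2 * Im \<xi>" by (auto simp: affine_fun_def)
  show "\<exists>w. a = (\<lambda>\<xi>. lor (lift \<xi>) w)"
    by (rule exI[of _ "vector [-c0, c1, c2]"]) (simp add: c lor_def fun_eq_iff)
next
  assume "\<exists>w. a = (\<lambda>\<xi>. lor (lift \<xi>) w)"
  then obtain w where "a = (\<lambda>\<xi>. lor (lift \<xi>) w)" by blast
  then show "affine_fun a" unfolding affine_fun_def
    by (intro exI[of _ "- w$1"] exI[of _ "w$2"] exI[of _ "w$3"]) (simp add: lor_def)
qed

definition cmp :: "bool \<Rightarrow> real \<Rightarrow> real \<Rightarrow> bool" where
  "cmp s x y \<longleftrightarrow> (if s then y \<le> x else x \<le> y)"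

definition AS :: "bool \<Rightarrow> (complex \<Rightarrow> complex) \<Rightarrow> complex \<Rightarrow> ereal set" where
  "AS s X \<eta> = {ereal (lor (lift \<eta>) w) | w. \<forall>z\<in>sphere 0 1. cmp s (lor (lift z) w) (phi X z)}"

lemma phi_env_AS: "phi_env s X \<eta> = (if s then Inf (AS s X \<eta>) else Sup (AS s X \<eta>))"
proof -
  have "{ereal (a \<eta>) | a. affine_fun a \<and> (\<forall>z\<in>sphere 0 1. a z \<ge> phi X z)} = AS True X \<eta>"
    unfolding AS_def affine_lor cmp_def by auto
  moreover have "{ereal (a \<eta>) | a. affine_fun a \<and> (\<forall>z\<in>sphere 0 1. a z \<le> phi X z)} = AS False X \<eta>"
    unfolding AS_def affine_lor cmp_def by auto
  ultimately show ?thesis unfolding phi_env_def by (cases s) simp_all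
qed

lemma cmp_scale: "h > 0 \<Longrightarrow> cmp s (h * x + d) (h * y + d) \<longleftrightarrow> cmp s x y"
  by (auto simp: cmp_def)

locale tr =
  fixes A :: "real^3^3" and X Y :: "complex \<Rightarrow> complex" and v :: "real^3"
  assumes posA: "pos A"
    and HY: "\<And>z. z \<in> sphere 0 1 \<Longrightarrow> phi Y z = lor (lift z) (- (A *v axis 1 1)) * phi X (act (matrix_inv A) z) + lor (lift z) v"
begin

abbreviation "B \<equiv> matrix_inv A"
abbreviation "h \<xi> \<equiv> lor (lift \<xi>) (- (A *v axis 1 1))"

lemma posB: "pos B" by (rule pos_inv[OF posA])

lemma AB: "A *v (B *v x) = x" "B *v (A *v x) = x"
  using pos_AB[OF posA] by auto

lemma BA_act: "cmod \<xi> \<le> 1 \<Longrightarrow> act B (act A \<xi>) = \<xi>"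
  by (rule act_inv[OF posA]) (use AB in auto)

lemma AB_act: "cmod \<xi> \<le> 1 \<Longrightarrow> act A (act B \<xi>) = \<xi>"
  by (rule act_inv[OF posB]) (use AB in auto)

lemma lor_tr: "cmod \<xi> \<le> 1 \<Longrightarrow> lor (lift \<xi>) (A *v w + v) = h \<xi> * lor (lift (act B \<xi>)) w + lor (lift \<xi>) v"
  using h_aff[OF posA] by (simp add: lor_lin)

lemma AS_tr: assumes "cmod \<xi> \<le> 1"
  shows "AS s Y \<xi> = Fe (h \<xi>) (lor (lift \<xi>) v) ` AS s X (act B \<xi>)"
proof
  show "AS s Y \<xi> \<subseteq> Fe (h \<xi>) (lor (lift \<xi>) v) ` AS s X (act B \<xi>)"
  proof
    fix e assume "e \<in> AS s Y \<xi>"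
    then obtain w where e: "e = ereal (lor (lift \<xi>) w)"
      and w: "\<forall>z\<in>sphere 0 1. cmp s (lor (lift z) w) (phi Y z)" unfolding AS_def by blast
    define w' where "w' = B *v (w - v)"
    have ww: "w = A *v w' + v" unfolding w'_def AB by simp
    have "\<forall>z\<in>sphere 0 1. cmp s (lor (lift z) w') (phi X z)"
    proof
      fix z :: complex assume z: "z \<in> sphere 0 1"
      define z' where "z' = act A z"
      have z': "z' \<in> sphere 0 1" unfolding z'_def by (rule act_sphere[OF posA z])
      have z'1: "cmod z' \<le> 1" using z' by simp
      have bz: "act B z' = z" unfolding z'_def using z BA_act by simp
      have "cmp s (lor (lift z') w) (phi Y z')" using w z' by blast
      then show "cmp s (lor (lift z) w') (phi X z)"
        unfolding ww lor_tr[OF z'1] HY[OF z'] bz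
        using cmp_scale[OF h_pos(2)[OF posA z'1]] by simp
    qed
    moreover have "e = Fe (h \<xi>) (lor (lift \<xi>) v) (ereal (lor (lift (act B \<xi>)) w'))"
      unfolding e ww lor_tr[OF assms] by simp
    ultimately show "e \<in> Fe (h \<xi>) (lor (lift \<xi>) v) ` AS s X (act B \<xi>)"
      unfolding AS_def by blast
  qed
  show "Fe (h \<xi>) (lor (lift \<xi>) v) ` AS s X (act B \<xi>) \<subseteq> AS s Y \<xi>"
  proof
    fix e assume "e \<in> Fe (h \<xi>) (lor (lift \<xi>) v) ` AS s X (act B \<xi>)"
    then obtain w' where e: "e = Fe (h \<xi>) (lor (lift \<xi>) v) (ereal (lor (lift (act B \<xi>)) w'))"
      and w': "\<forall>z\<in>sphere 0 1. cmp s (lor (lift z) w') (phi X z)" unfolding AS_def by blast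
    have "\<forall>z\<in>sphere 0 1. cmp s (lor (lift z) (A *v w' + v)) (phi Y z)"
    proof
      fix z :: complex assume z: "z \<in> sphere 0 1"
      have z1: "cmod z \<le> 1" using z by simp
      have bz: "act B z \<in> sphere 0 1" by (rule act_sphere[OF posB z])
      have "cmp s (lor (lift (act B z)) w') (phi X (act B z))" using w' bz by blast
      then show "cmp s (lor (lift z) (A *v w' + v)) (phi Y z)"
        unfolding lor_tr[OF z1] HY[OF z]
        using cmp_scale[OF h_pos(2)[OF posA z1]] by simp
    qed
    moreover have "e = ereal (lor (lift \<xi>) (A *v w' + v))"
      unfolding e lor_tr[OF assms] by simp
    ultimately show "e \<in> AS s Y \<xi>" unfolding AS_def by blast
  qed
qed

lemma phi_env_tr: assumes "cmod \<xi> \<le> 1"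
  shows "phi_env s Y \<xi> = Fe (h \<xi>) (lor (lift \<xi>) v) (phi_env s X (act B \<xi>))"
proof -
  have hp: "h \<xi> > 0" by (rule h_pos(2)[OF posA assms])
  note iso = iso_Sup[of "Fe (h \<xi>) (lor (lift \<xi>) v)", OF Fe_mono_iff[OF hp] Fe_surj[OF hp]]
  show ?thesis unfolding phi_env_AS AS_tr[OF assms] iso by simp
qed

lemma ereal_lor_tr: "cmod \<xi> \<le> 1 \<Longrightarrow> ereal (lor (lift \<xi>) (A *v w + v)) = Fe (h \<xi>) (lor (lift \<xi>) v) (ereal (lor (lift (act B \<xi>)) w))"
  by (simp add: lor_tr)

lemma Sig_mem: assumes "\<eta> \<in> ball 0 1"
  shows "A *v \<sigma> + v \<in> Sig s Y \<eta> \<longleftrightarrow> \<sigma> \<in> Sig s X (act B \<eta>)"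
proof -
  have eta1: "cmod \<eta> \<le> 1" using assms by simp
  have hp: "\<And>\<xi>. cmod \<xi> \<le> 1 \<Longrightarrow> h \<xi> > 0" by (rule h_pos(2)[OF posA])
  have P1: "(\<forall>\<xi>\<in>ball 0 1. (if s then ereal (lor (lift \<xi>) (A *v \<sigma> + v)) \<ge> phi_env s Y \<xi>
              else ereal (lor (lift \<xi>) (A *v \<sigma> + v)) \<le> phi_env s Y \<xi>))
      \<longleftrightarrow> (\<forall>\<zeta>\<in>ball 0 1. (if s then ereal (lor (lift \<zeta>) \<sigma>) \<ge> phi_env s X \<zeta>
              else ereal (lor (lift \<zeta>) \<sigma>) \<le> phi_env s X \<zeta>))" (is "?L \<longleftrightarrow> ?R")
  proof
    assume L: ?L
    show ?R
    proof
      fix \<zeta> :: complex assume z: "\<zeta> \<in> ball 0 1"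
      have z1: "cmod \<zeta> \<le> 1" using z by simp
      have az: "act A \<zeta> \<in> ball 0 1" by (rule act_ball[OF posA z])
      have az1: "cmod (act A \<zeta>) \<le> 1" using az by simp
      have bz: "act B (act A \<zeta>) = \<zeta>" by (rule BA_act[OF z1])
      show "if s then ereal (lor (lift \<zeta>) \<sigma>) \<ge> phi_env s X \<zeta> else ereal (lor (lift \<zeta>) \<sigma>) \<le> phi_env s X \<zeta>"
        using L[rule_format, OF az] unfolding ereal_lor_tr[OF az1] phi_env_tr[OF az1] bz
        Fe_mono_iff[OF hp[OF az1]] .
    qed
  next
    assume R: ?R
    show ?L
    proof
      fix \<xi> :: complex assume x: "\<xi> \<in> ball 0 1"
      have x1: "cmod \<xi> \<le> 1" using x by simp
      have bx: "act B \<xi> \<in> ball 0 1" by (rule act_ball[OF posB x])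
      show "if s then ereal (lor (lift \<xi>) (A *v \<sigma> + v)) \<ge> phi_env s Y \<xi> else ereal (lor (lift \<xi>) (A *v \<sigma> + v)) \<le> phi_env s Y \<xi>"
        unfolding ereal_lor_tr[OF x1] phi_env_tr[OF x1] Fe_mono_iff[OF hp[OF x1]]
        using R[rule_format, OF bx] .
    qed
  qed
  have P2: "ereal (lor (lift \<eta>) (A *v \<sigma> + v)) = phi_env s Y \<eta> \<longleftrightarrow> ereal (lor (lift (act B \<eta>)) \<sigma>) = phi_env s X (act B \<eta>)"
    unfolding ereal_lor_tr[OF eta1] phi_env_tr[OF eta1] Fe_inj_iff[OF hp[OF eta1]] ..
  show ?thesis unfolding Sig_def mem_Collect_eq P1 P2 ..
qed

lemma Sig_tr: assumes "\<eta> \<in> ball 0 1"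
  shows "Sig s Y \<eta> = (\<lambda>w. A *v w + v) ` Sig s X (act B \<eta>)"
proof
  show "(\<lambda>w. A *v w + v) ` Sig s X (act B \<eta>) \<subseteq> Sig s Y \<eta>" using Sig_mem[OF assms] by auto
  show "Sig s Y \<eta> \<subseteq> (\<lambda>w. A *v w + v) ` Sig s X (act B \<eta>)"
  proof
    fix \<sigma>' assume a: "\<sigma>' \<in> Sig s Y \<eta>"
    have e: "\<sigma>' = A *v (B *v (\<sigma>' - v)) + v" unfolding AB by simp
    then have "B *v (\<sigma>' - v) \<in> Sig s X (act B \<eta>)" using Sig_mem[OF assms] a by metis
    then show "\<sigma>' \<in> (\<lambda>w. A *v w + v) ` Sig s X (act B \<eta>)" using e by blast
  qed
qed

end



lemma aff_max: assumes "\<forall>z\<in>sphere 0 1. lor (lift z) w \<le> 0" "cmod \<xi> \<le> 1"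
  shows "lor (lift \<xi>) w \<le> 0"
proof -
  define r where "r = cmod \<xi>"
  define u where "u = (if \<xi> = 0 then 1 else \<xi> / complex_of_real r)"
  have u: "u \<in> sphere 0 1" "- u \<in> sphere 0 1" by (auto simp: u_def r_def norm_divide)
  have xi: "\<xi> = complex_of_real r * u" by (auto simp: u_def r_def)
  have g: "lor (lift (complex_of_real r * u)) w = ((1 + r)/2) * lor (lift u) w + ((1 - r)/2) * lor (lift (-u)) w"
    by (simp add: lor_def field_simps)
  have r: "0 \<le> r" "r \<le> 1" using assms(2) by (auto simp: r_def)
  have "lor (lift u) w \<le> 0" "lor (lift (-u)) w \<le> 0" using assms(1) u by auto
  then have "((1 + r)/2) * lor (lift u) w \<le> 0" "((1 - r)/2) * lor (lift (-u)) w \<le> 0"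
    using r by (auto intro: mult_nonneg_nonpos)
  then show ?thesis unfolding xi g by linarith
qed

lemma zero_lemma: assumes "\<eta> \<in> ball 0 1" "\<forall>\<xi>\<in>ball 0 1. lor (lift \<xi>) \<sigma> \<le> 0" "lor (lift \<eta>) \<sigma> = 0"
  shows "\<sigma> = 0"
proof -
  define e where "e = (1 - cmod \<eta>) / 2"
  have e: "e > 0" using assms(1) by (simp add: e_def)
  have inb: "\<eta> + d \<in> ball 0 1" if "cmod d = e" for d
  proof -
    have "cmod (\<eta> + d) \<le> cmod \<eta> + cmod d" by (rule norm_triangle_ineq)
    moreover have "cmod \<eta> < 1" using assms(1) by simp
    moreover have "2 * cmod d = 1 - cmod \<eta>" using that by (simp add: e_def)
    ultimately show ?thesis unfolding mem_ball_0 by linarith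
  qed
  have l: "lor (lift (\<eta> + d)) \<sigma> = lor (lift \<eta>) \<sigma> + Re d * \<sigma>$2 + Im d * \<sigma>$3" for d
    by (simp add: lor_def algebra_simps)
  have "lor (lift (\<eta> + complex_of_real e)) \<sigma> \<le> 0" "lor (lift (\<eta> + complex_of_real (-e))) \<sigma> \<le> 0"
       "lor (lift (\<eta> + \<i> * complex_of_real e)) \<sigma> \<le> 0" "lor (lift (\<eta> + \<i> * complex_of_real (-e))) \<sigma> \<le> 0"
  proof -
    have "\<eta> + complex_of_real e \<in> ball 0 1" "\<eta> + complex_of_real (-e) \<in> ball 0 1"
       "\<eta> + \<i> * complex_of_real e \<in> ball 0 1" "\<eta> + \<i> * complex_of_real (-e) \<in> ball 0 1"
      by (rule inb, use e in \<open>simp add: norm_mult\<close>)+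
    then show "lor (lift (\<eta> + complex_of_real e)) \<sigma> \<le> 0" "lor (lift (\<eta> + complex_of_real (-e))) \<sigma> \<le> 0"
       "lor (lift (\<eta> + \<i> * complex_of_real e)) \<sigma> \<le> 0" "lor (lift (\<eta> + \<i> * complex_of_real (-e))) \<sigma> \<le> 0"
      using assms(2) by blast+
  qed
  then have "e * \<sigma>$2 \<le> 0" "-e * \<sigma>$2 \<le> 0" "e * \<sigma>$3 \<le> 0" "-e * \<sigma>$3 \<le> 0"
    unfolding l assms(3) by simp_all
  then have "\<sigma>$2 = 0" "\<sigma>$3 = 0" using e
    by (metis mult_le_0_iff neg_0_le_iff_le not_less order_antisym mult_minus_left)+
  moreover have "\<sigma>$1 = 0" using assms(3) calculation by (simp add: lor_def)
  ultimately show ?thesis by (simp add: vec_eq_iff forall_3)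
qed

definition Z0 :: "complex \<Rightarrow> complex" where "Z0 = (\<lambda>_. 0)"

lemma phi_Z0[simp]: "phi Z0 z = 0" by (simp add: phi_def Z0_def)

lemma phi_env_Z0: assumes "cmod \<xi> \<le> 1" shows "phi_env s Z0 \<xi> = 0"
proof -
  have zero: "0 \<in> AS s Z0 \<xi>" unfolding AS_def
    by (rule CollectI, rule exI[of _ 0]) (simp add: lor_def cmp_def zero_ereal_def)
  show ?thesis
  proof (cases s)
    case True
    have "\<forall>e\<in>AS s Z0 \<xi>. 0 \<le> e"
    proof
      fix e assume "e \<in> AS s Z0 \<xi>"
      then obtain w where e: "e = ereal (lor (lift \<xi>) w)" and w: "\<forall>z\<in>sphere 0 1. cmp s (lor (lift z) w) 0"
        unfolding AS_def by auto
      have "\<forall>z\<in>sphere 0 1. lor (lift z) (-w) \<le> 0" using w True by (simp add: cmp_def lor_lin)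
      then have "lor (lift \<xi>) (-w) \<le> 0" using aff_max assms by blast
      then show "0 \<le> e" unfolding e by (simp add: lor_lin)
    qed
    then have "Inf (AS s Z0 \<xi>) = 0" using zero by (meson Inf_greatest Inf_lower antisym)
    then show ?thesis using True by (simp add: phi_env_AS)
  next
    case False
    have "\<forall>e\<in>AS s Z0 \<xi>. e \<le> 0"
    proof
      fix e assume "e \<in> AS s Z0 \<xi>"
      then obtain w where e: "e = ereal (lor (lift \<xi>) w)" and w: "\<forall>z\<in>sphere 0 1. cmp s (lor (lift z) w) 0"
        unfolding AS_def by auto
      have "\<forall>z\<in>sphere 0 1. lor (lift z) w \<le> 0" using w False by (simp add: cmp_def)
      then have "lor (lift \<xi>) w \<le> 0" using aff_max assms by blast
      then show "e \<le> 0" unfolding e by simp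
    qed
    then have "Sup (AS s Z0 \<xi>) = 0" using zero by (meson Sup_least Sup_upper antisym)
    then show ?thesis using False by (simp add: phi_env_AS)
  qed
qed

lemma Sig_Z0: assumes "\<eta> \<in> ball 0 1" shows "Sig s Z0 \<eta> = {0}"
proof
  have pe: "\<And>\<xi> s. \<xi> \<in> ball 0 1 \<Longrightarrow> phi_env s Z0 \<xi> = 0" using phi_env_Z0 by simp
  show "{0} \<subseteq> Sig s Z0 \<eta>" using assms by (cases s) (simp_all add: Sig_def pe lor_def zero_ereal_def)
  show "Sig s Z0 \<eta> \<subseteq> {0}"
  proof
    fix \<sigma> assume "\<sigma> \<in> Sig s Z0 \<eta>"
    then have a: "\<forall>\<xi>\<in>ball 0 1. (if s then 0 \<le> lor (lift \<xi>) \<sigma> else lor (lift \<xi>) \<sigma> \<le> 0)"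
      and b: "lor (lift \<eta>) \<sigma> = 0"
      using assms by (auto simp: Sig_def pe zero_ereal_def)
    show "\<sigma> \<in> {0}"
    proof (cases s)
      case True
      have "- \<sigma> = 0" by (rule zero_lemma[OF assms]) (use a b True in \<open>auto simp: lor_lin\<close>)
      then show ?thesis by simp
    next
      case False
      show ?thesis using zero_lemma[OF assms, of \<sigma>] a b False by auto
    qed
  qed
qed

lemma sig_seg: assumes "Sig s X \<eta> = closed_segment a b" shows "sig s X \<eta> = midpoint a b"
  unfolding sig_def
proof (rule someI2)
  show "\<exists>c d. Sig s X \<eta> = closed_segment c d \<and> midpoint a b = midpoint c d" using assms by blast
  fix m assume "\<exists>c d. Sig s X \<eta> = closed_segment c d \<and> m = midpoint c d"
  then obtain c d where "closed_segment a b = closed_segment c d" "m = midpoint c d" using assms by auto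
  then show "m = midpoint a b" by (auto simp: doubleton_eq_iff midpoint_sym)
qed

lemma seg_img: "(\<lambda>w. A *v w + v) ` closed_segment a b = closed_segment (A *v a + v) (A *v b + (v::real^3))"
proof -
  have "closed_segment (v + A *v a) (v + A *v b) = (\<lambda>x. v + x) ` ((\<lambda>w. A *v w) ` closed_segment a b)"
    by (simp add: closed_segment_translation closed_segment_linear_image)
  then show ?thesis by (simp add: image_image add.commute)
qed

lemma mid_img: "midpoint ((A::real^3^3) *v a + v) (A *v b + v) = A *v midpoint a b + (v::real^3)"
  by (simp add: vec_eq_iff midpoint_def matrix_vector_mult_def sum_3 field_simps)

lemma pos_mat1: "pos (mat 1)"
  using mat1_O12 by (simp add: pos_def mat_def)

lemma Sig_Lam: assumes "\<eta> \<in> ball 0 1" shows "Sig s (Lam v) \<eta> = closed_segment v v"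
proof -
  interpret t: tr "mat 1" Z0 "Lam v" v
  proof
    show "pos (mat 1)" by (rule pos_mat1)
    fix z :: complex assume z: "z \<in> sphere 0 1"
    then have "z \<noteq> 0" by auto
    then have "phi (Lam v) z = lor (lift z) v" using z by (simp add: phi_def Lam_circle)
    then show "phi (Lam v) z = lor (lift z) (- (mat 1 *v axis 1 1)) * phi Z0 (act (matrix_inv (mat 1)) z) + lor (lift z) v"
      by simp
  qed
  have bb: "act (matrix_inv (mat 1)) \<eta> \<in> ball 0 1" by (rule act_ball[OF t.posB assms])
  show ?thesis unfolding t.Sig_tr[OF assms] Sig_Z0[OF bb] by simp
qed

theorem lemma4p7:
  fixes X :: "complex \<Rightarrow> complex" and A :: "real^3^3" and v :: "real^3" and s :: bool
  assumes "vf_S1 X" and "E_defined s X" and "A \<in> O0_12"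
  shows "E_defined s (\<lambda>z. push A X z + Lam v z) \<and> E_defined s (Lam v)
    \<and> (\<forall>\<eta>\<in>ball 0 1. E s (\<lambda>z. push A X z + Lam v z) \<eta> = push A (E s X) \<eta> + E s (Lam v) \<eta>)"
proof -
  have posA: "pos A" using O0_props[OF assms(3)] by (simp add: pos_def)
  have det: "det A = 1" using O0_props[OF assms(3)] by simp
  define Y where "Y = (\<lambda>z. push A X z + Lam v z)"
  interpret t: tr A X Y v
  proof
    show "pos A" by (rule posA)
    fix z :: complex assume z: "z \<in> sphere 0 1"
    show "phi Y z = lor (lift z) (- (A *v axis 1 1)) * phi X (act (matrix_inv A) z) + lor (lift z) v"
      unfolding Y_def phi_add_Lam[OF z] phi_push[OF posA det assms(1) z] by simp
  qed
  have segY: "\<exists>a b. Sig s X (act (matrix_inv A) \<eta>) = closed_segment a b \<and>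
      Sig s Y \<eta> = closed_segment (A *v a + v) (A *v b + v)" if "\<eta> \<in> ball 0 1" for \<eta>
  proof -
    have "act (matrix_inv A) \<eta> \<in> ball 0 1" by (rule act_ball[OF t.posB that])
    then obtain a b where ab: "Sig s X (act (matrix_inv A) \<eta>) = closed_segment a b"
      using assms(2) unfolding E_defined_def by blast
    then show ?thesis using t.Sig_tr[OF that] seg_img by metis
  qed
  have ED: "E_defined s Y" unfolding E_defined_def using segY by blast
  have EL: "E_defined s (Lam v)" unfolding E_defined_def using Sig_Lam by blast
  have EQ: "E s Y \<eta> = push A (E s X) \<eta> + E s (Lam v) \<eta>" if eta: "\<eta> \<in> ball 0 1" for \<eta>
  proof -
    have e1: "cmod \<eta> \<le> 1" using eta by simp
    obtain a b where ab: "Sig s X (act (matrix_inv A) \<eta>) = closed_segment a b"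
      and sY: "Sig s Y \<eta> = closed_segment (A *v a + v) (A *v b + v)" using segY[OF eta] by blast
    define m where "m = midpoint a b"
    have sigX: "sig s X (act (matrix_inv A) \<eta>) = m" unfolding m_def by (rule sig_seg[OF ab])
    have sigY: "sig s Y \<eta> = A *v m + v" unfolding m_def mid_img[symmetric] by (rule sig_seg[OF sY])
    have sigL: "sig s (Lam v) \<eta> = v" using sig_seg[OF Sig_Lam[OF eta]] by simp
    have "push A (E s X) \<eta> = 1 *\<^sub>R push A (Lam m) \<eta>"
      by (rule push_lin[OF posA e1]) (simp add: E_eq sigX)
    also have "\<dots> = Lam (A *v m) \<eta>" by (simp add: push_Lam[OF posA det e1])
    finally have "push A (E s X) \<eta> = Lam (A *v m) \<eta>" .
    then show ?thesis by (simp add: E_eq sigY sigL Lam_add)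
  qed
  show ?thesis using ED EL EQ unfolding Y_def by blast
qed

end
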